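(* Let $G$ be a countable group of orientation preserving $C^2$ (resp. $C^3$) diffeomorphisms of ${\bf S}^1={\bf R}/{\bf Z}$ preserving no probability measure on ${\bf S}^1$, let $\mu$ be a probability measure on $G$ whose support generates $G$ as a semi-group with $\int|\log g'|_\infty d\mu(g)<\infty$, and let $\nu,\lambda<0,C_2,C_3$ be as in the context. Suppose \[\int |Lg|_\infty\,d\mu(g)<\infty\qquad(\text{resp. } \int|Sg|_\infty\,d\mu(g)<\infty).\] Then for $\mu^{\bf N}$-a.e. ${\bf g}$ the number \[C_4({\bf g}):=\sum_{n\ge0}|Lg_{n+1}|_\infty\exp(\lambda n/2)\qquad(\text{resp. } C_4({\bf g}):=\sum_{n\ge0}|Sg_{n+1}|_\infty\exp(\lambda n))\] is finite. Moreover, let $\kappa>0$ and $r=\dfrac{\kappa e^{-\kappa}}{C_2(x,{\bf g})C_3({\bf g})}$. For every $x\in{\bf S}^1$ and $\mu^{\bf N}$-a.e. ${\bf g}$ for which $C_2(x,{\bf g})$ and $C_3({\bf g})$ are finite, for every $n\ge0$ and every $y\in[x-r,x+r]$, \[|L{\bf l_n}(y)|\le C_2(x,{\bf g})C_4({\bf g})e^{\kappa}\qquad(\text{resp. } |S{\bf l_n}(y)|\le C_2(x,{\bf g})^2C_4({\bf g})e^{2\kappa}).\]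
   Context: $Lg=g''/g'$ is the logarithmic derivative and $Sg=(g''/g')'-\frac12(g''/g')^2$ the Schwarzian derivative; $|\cdot|_\infty$ is the sup norm on the circle. $\nu$ is the unique $\mu$-stationary probability measure on ${\bf S}^1$, $\lambda=\int\log g'(x)\,d\mu(g)\,d\nu(x)$, known to be negative. $G^{\bf N}$ carries $\mu^{\bf N}$, $g_n$ is the $n$-th coordinate, ${\bf l_n}=g_n\circ\cdots\circ g_1$, ${\bf l_0}=\mathrm{id}$. $C_2(x,{\bf g})\ge1$ is the infimum of $C\ge1$ with $\frac1C e^{3n\lambda/2}\le{\bf l_n}'(x)\le Ce^{n\lambda/2}$ for all $n\ge0$. $C_3({\bf g})=\sum_{n\ge0}|\log g_{n+1}'|_1\exp(n\lambda/2)$, where $|\varphi|_1=\sup_{x\ne y}|\varphi(x)-\varphi(y)|/|x-y|$ (so $|\log g'|_1=|Lg|_\infty$). *)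

theory Defs
  imports "HOL-Probability.Probability"
begin

text \<open>Circle diffeomorphisms are represented by their lifts to the real line:
  maps g with g(x+1) = g x + 1. The circle map is x \<mapsto> frac (g x) on [0,1).\<close>

definition circ_C2 :: "(real \<Rightarrow> real) \<Rightarrow> bool" where
  "circ_C2 g \<longleftrightarrow> (\<forall>x. g (x + 1) = g x + 1) \<and> (\<forall>x. g differentiable at x)
     \<and> (\<forall>x. deriv g differentiable at x) \<and> continuous_on UNIV (deriv (deriv g))
     \<and> (\<forall>x. deriv g x > 0)"

definition circ_C3 :: "(real \<Rightarrow> real) \<Rightarrow> bool" where
  "circ_C3 g \<longleftrightarrow> circ_C2 g \<and> (\<forall>x. deriv (deriv g) differentiable at x)
     \<and> continuous_on UNIV (deriv (deriv (deriv g)))"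

definition Ldiff :: "(real \<Rightarrow> real) \<Rightarrow> real \<Rightarrow> real" where
  "Ldiff g x = deriv (deriv g) x / deriv g x"

definition Sdiff :: "(real \<Rightarrow> real) \<Rightarrow> real \<Rightarrow> real" where
  "Sdiff g x = deriv (Ldiff g) x - 1/2 * (Ldiff g x)^2"

definition supnorm :: "(real \<Rightarrow> real) \<Rightarrow> real" where
  "supnorm f = Sup (range (\<lambda>x. \<bar>f x\<bar>))"

definition lip1 :: "(real \<Rightarrow> real) \<Rightarrow> real" where
  "lip1 f = Sup {\<bar>f x - f y\<bar> / \<bar>x - y\<bar> | x y. x \<noteq> y}"

inductive_set sgen :: "(real \<Rightarrow> real) set \<Rightarrow> (real \<Rightarrow> real) set" for S where
  base: "g \<in> S \<Longrightarrow> g \<in> sgen S"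
| comp: "f \<in> sgen S \<Longrightarrow> g \<in> sgen S \<Longrightarrow> f \<circ> g \<in> sgen S"

text \<open>The projection of a set of lifts to the circle is a group: inverses exist modulo integer translations.\<close>
definition is_circ_group :: "(real \<Rightarrow> real) set \<Rightarrow> bool" where
  "is_circ_group G \<longleftrightarrow> (\<forall>g\<in>G. \<exists>h\<in>G. \<exists>k::int. \<forall>x. h (g x) = x + of_int k)"

text \<open>Probability measures on the circle, realised on [0,1).\<close>
definition circ_prob :: "real measure \<Rightarrow> bool" where
  "circ_prob m \<longleftrightarrow> prob_space m \<and> sets m = sets borel \<and> emeasure m {0..<1} = 1"

definition circ_push :: "(real \<Rightarrow> real) \<Rightarrow> real measure \<Rightarrow> real measure" where
  "circ_push g m = distr m borel (\<lambda>x. frac (g x))"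

definition stationary :: "(real \<Rightarrow> real) pmf \<Rightarrow> real measure \<Rightarrow> bool" where
  "stationary \<mu> m \<longleftrightarrow> circ_prob m \<and>
     (\<forall>A\<in>sets borel. emeasure m A = (\<integral>\<^sup>+ g. emeasure (circ_push g m) A \<partial>measure_pmf \<mu>))"

text \<open>The random compositions l_n = g_n o ... o g_1, where g_(n+1) = w n.\<close>
primrec lcomp :: "(nat \<Rightarrow> real \<Rightarrow> real) \<Rightarrow> nat \<Rightarrow> real \<Rightarrow> real" where
  "lcomp w 0 = id"
| "lcomp w (Suc n) = w n \<circ> lcomp w n"

definition C2set :: "real \<Rightarrow> real \<Rightarrow> (nat \<Rightarrow> real \<Rightarrow> real) \<Rightarrow> real set" where
  "C2set lam x w = {C. C \<ge> 1 \<and> (\<forall>n. exp (3 * real n * lam / 2) / C \<le> deriv (lcomp w n) x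
                        \<and> deriv (lcomp w n) x \<le> C * exp (real n * lam / 2))}"

definition C2fin :: "real \<Rightarrow> real \<Rightarrow> (nat \<Rightarrow> real \<Rightarrow> real) \<Rightarrow> bool" where
  "C2fin lam x w \<longleftrightarrow> C2set lam x w \<noteq> {}"

definition C2val :: "real \<Rightarrow> real \<Rightarrow> (nat \<Rightarrow> real \<Rightarrow> real) \<Rightarrow> real" where
  "C2val lam x w = Inf (C2set lam x w)"

definition C3term :: "real \<Rightarrow> (nat \<Rightarrow> real \<Rightarrow> real) \<Rightarrow> nat \<Rightarrow> real" where
  "C3term lam w n = lip1 (\<lambda>x. ln (deriv (w n) x)) * exp (real n * lam / 2)"

definition C3fin :: "real \<Rightarrow> (nat \<Rightarrow> real \<Rightarrow> real) \<Rightarrow> bool" where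
  "C3fin lam w \<longleftrightarrow> summable (C3term lam w)"

definition C3val :: "real \<Rightarrow> (nat \<Rightarrow> real \<Rightarrow> real) \<Rightarrow> real" where
  "C3val lam w = suminf (C3term lam w)"

end

theory Submission
  imports Defs
begin


lemma AE_support:
  "AE w in PiM UNIV (\<lambda>_::nat. measure_pmf \<mu>). \<forall>k. w k \<in> set_pmf \<mu>"
  by (subst AE_all_countable) (auto intro!: AE_PiM_component AE_measure_pmf prob_space_measure_pmf)

lemma comp_integral:
  fixes h :: "'a \<Rightarrow> ennreal"
  shows "(\<integral>\<^sup>+ w. h (w n) \<partial>PiM UNIV (\<lambda>_::nat. measure_pmf \<mu>)) = (\<integral>\<^sup>+ g. h g \<partial>measure_pmf \<mu>)"
proof -
  have "(\<integral>\<^sup>+ g. h g \<partial>measure_pmf \<mu>) =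
     (\<integral>\<^sup>+ g. h g \<partial>distr (PiM UNIV (\<lambda>_::nat. measure_pmf \<mu>)) (measure_pmf \<mu>) (\<lambda>w. w n))"
    by (subst distr_PiM_component) (auto intro: prob_space_measure_pmf)
  also have "\<dots> = (\<integral>\<^sup>+ w. h (w n) \<partial>PiM UNIV (\<lambda>_::nat. measure_pmf \<mu>))"
    by (rule nn_integral_distr) auto
  finally show ?thesis by simp
qed

lemma meas_comp:
  fixes h :: "'a \<Rightarrow> ennreal"
  shows "(\<lambda>w. h (w n)) \<in> borel_measurable (PiM UNIV (\<lambda>_::nat. measure_pmf \<mu>))"
proof -
  have "(\<lambda>w. w n) \<in> measurable (PiM UNIV (\<lambda>_::nat. measure_pmf \<mu>)) (measure_pmf \<mu>)"
    by (rule measurable_component_singleton) simp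
  moreover have "h \<in> borel_measurable (measure_pmf \<mu>)" by simp
  ultimately show ?thesis by (rule measurable_compose)
qed

lemma AE_sum_fin:
  fixes F :: "'a \<Rightarrow> real"
  assumes fin: "(\<integral>\<^sup>+ g. ennreal (F g) \<partial>measure_pmf \<mu>) < \<infinity>"
    and c: "\<And>n. c n \<ge> 0" "summable c"
  shows "AE w in PiM UNIV (\<lambda>_::nat. measure_pmf \<mu>). (\<Sum>n. ennreal (c n * F (w n))) \<noteq> \<infinity>"
proof (rule nn_integral_PInf_AE)
  show "(\<lambda>w. \<Sum>n. ennreal (c n * F (w n))) \<in> borel_measurable (PiM UNIV (\<lambda>_::nat. measure_pmf \<mu>))"
    by (rule borel_measurable_suminf_order) (rule meas_comp)
  have "(\<integral>\<^sup>+ w. (\<Sum>n. ennreal (c n * F (w n))) \<partial>PiM UNIV (\<lambda>_::nat. measure_pmf \<mu>))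
     = (\<Sum>n. \<integral>\<^sup>+ w. ennreal (c n * F (w n)) \<partial>PiM UNIV (\<lambda>_::nat. measure_pmf \<mu>))"
    by (intro nn_integral_suminf meas_comp)
  also have "\<dots> = (\<Sum>n. ennreal (c n) * \<integral>\<^sup>+ w. ennreal (F (w n)) \<partial>PiM UNIV (\<lambda>_::nat. measure_pmf \<mu>))"
    using c by (subst nn_integral_cmult[symmetric])
      (auto intro!: meas_comp simp: ennreal_mult')
  also have "\<dots> = (\<Sum>n. ennreal (c n) * (\<integral>\<^sup>+ g. ennreal (F g) \<partial>measure_pmf \<mu>))"
    by (simp add: comp_integral[where h="\<lambda>g. ennreal (F g)"])
  also have "\<dots> = ennreal (suminf c) * (\<integral>\<^sup>+ g. ennreal (F g) \<partial>measure_pmf \<mu>)"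
    using c by (simp add: suminf_ennreal2)
  also have "\<dots> \<noteq> \<infinity>" using fin by (simp add: ennreal_mult_eq_top_iff)
  finally show "(\<integral>\<^sup>+ w. (\<Sum>n. ennreal (c n * F (w n))) \<partial>PiM UNIV (\<lambda>_::nat. measure_pmf \<mu>)) \<noteq> \<infinity>" .
qed

lemma AE_summable:
  fixes F :: "'a \<Rightarrow> real"
  assumes fin: "(\<integral>\<^sup>+ g. ennreal (F g) \<partial>measure_pmf \<mu>) < \<infinity>"
    and c: "\<And>n. c n \<ge> 0" "summable c"
    and nn: "\<And>g. g \<in> set_pmf \<mu> \<Longrightarrow> F g \<ge> 0"
  shows "AE w in PiM UNIV (\<lambda>_::nat. measure_pmf \<mu>). summable (\<lambda>n. F (w n) * c n)"
  using AE_sum_fin[OF fin c] AE_support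
proof eventually_elim
  case (elim w)
  have "summable (\<lambda>n. c n * F (w n))"
    by (rule summable_suminf_not_top) (use elim nn c in auto)
  then show ?case by (simp add: mult.commute)
qed



lemma deriv_shift: "deriv (\<lambda>t. f (t + c)) x = deriv f (x + c)"
  unfolding deriv_def by (simp add: DERIV_shift)

lemma deriv_periodic:
  assumes "\<And>x. h (x + 1) = (h x :: real)"
  shows "deriv h (x + 1) = deriv h x"
proof -
  have "h = (\<lambda>t. h (t + 1))" using assms by auto
  hence "deriv h x = deriv (\<lambda>t. h (t + 1)) x" by simp
  thus ?thesis by (simp add: deriv_shift)
qed

lemma deriv_lift:
  assumes "\<And>x. g (x + 1) = g x + (1::real)" and d: "\<And>x. g differentiable at x"
  shows "deriv g (x + 1) = deriv g x"
proof -
  have "deriv g (x+1) = deriv (\<lambda>t. g (t + 1)) x" by (simp add: deriv_shift)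
  also have "(\<lambda>t. g (t + 1)) = (\<lambda>t. g t + 1)" using assms by auto
  also have "deriv (\<lambda>t. g t + 1) x = deriv g x"
  proof -
    have "DERIV g x :> deriv g x" using d by (simp add: DERIV_deriv_iff_real_differentiable)
    hence "DERIV (\<lambda>t. g t + 1) x :> deriv g x + 0" by (intro DERIV_add DERIV_const)
    thus ?thesis by (simp add: DERIV_imp_deriv)
  qed
  finally show ?thesis .
qed

lemma periodic_int:
  fixes h :: "real \<Rightarrow> real"
  assumes "\<And>x. h (x + 1) = (h x :: real)"
  shows "h (x + of_int k) = h x"
proof -
  have nat: "h (y + of_nat n) = h y" for y n
  proof (induction n)
    case (Suc n)
    have "y + of_nat (Suc n) = (y + of_nat n) + 1" by simp
    thus ?case using Suc assms by metis
  qed simp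
  show ?thesis
  proof (cases "k \<ge> 0")
    case True thus ?thesis using nat[of x "nat k"] by simp
  next
    case False
    have "h (x + of_int k) = h (x + of_int k + of_nat (nat (-k)))" by (rule nat[symmetric])
    thus ?thesis using False by simp
  qed
qed

lemma periodic_bounded:
  fixes h :: "real \<Rightarrow> real"
  assumes p: "\<And>x. h (x + 1) = (h x :: real)" and c: "continuous_on UNIV h"
  shows "bdd_above (range (\<lambda>x. \<bar>h x\<bar>))"
proof -
  have "compact (h ` {0..1})"
    by (rule compact_continuous_image) (use c continuous_on_subset in auto)
  then obtain M where M: "\<And>y. y \<in> h ` {0..1} \<Longrightarrow> norm y \<le> M"
    using compact_imp_bounded bounded_iff by metis
  have "\<bar>h x\<bar> \<le> M" for x
  proof -
    have "h x = h ((x - of_int \<lfloor>x\<rfloor>) + of_int \<lfloor>x\<rfloor>)" by simp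
    also have "\<dots> = h (x - of_int \<lfloor>x\<rfloor>)" by (rule periodic_int[where h=h, OF p])
    finally have "h x = h (x - of_int \<lfloor>x\<rfloor>)" .
    moreover have "x - of_int \<lfloor>x\<rfloor> \<in> {0..1}"
      using floor_correct[of x] unfolding of_int_add of_int_1 atLeastAtMost_iff by linarith
    ultimately show ?thesis using M by force
  qed
  thus ?thesis by (intro bdd_aboveI[where M=M]) auto
qed

lemma mvt_abs:
  fixes f f' :: "real \<Rightarrow> real"
  assumes d: "\<And>t. DERIV f t :> f' t" and b: "\<And>t. min a b \<le> t \<Longrightarrow> t \<le> max a b \<Longrightarrow> \<bar>f' t\<bar> \<le> M"
  shows "\<bar>f b - f a\<bar> \<le> M * \<bar>b - a\<bar>"
proof -
  consider "a < b" | "b < a" | "a = b" by linarith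
  then show ?thesis
  proof cases
    case 1
    then obtain z where z: "a < z" "z < b" "f b - f a = (b - a) * f' z"
      using MVT2[OF 1, of f f'] d by blast
    have "\<bar>f' z\<bar> \<le> M" using b z by auto
    then show ?thesis using z 1 by (simp add: abs_mult mult.commute mult_right_mono)
  next
    case 2
    then obtain z where z: "b < z" "z < a" "f a - f b = (a - b) * f' z"
      using MVT2[OF 2, of f f'] d by blast
    have "\<bar>f' z\<bar> \<le> M" using b z by auto
    then have "\<bar>f a - f b\<bar> \<le> M * \<bar>a - b\<bar>" using z 2 by (simp add: abs_mult mult.commute mult_right_mono)
    then show ?thesis by (simp add: abs_minus_commute)
  qed simp
qed

lemma lip_gen:
  fixes \<phi> \<phi>' :: "real \<Rightarrow> real"
  assumes d: "\<And>t. DERIV \<phi> t :> \<phi>' t" and b: "\<And>t. \<bar>\<phi>' t\<bar> \<le> M"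
  shows "\<bar>\<phi> a - \<phi> c\<bar> \<le> lip1 \<phi> * \<bar>a - c\<bar>" "lip1 \<phi> \<ge> 0"
proof -
  let ?S = "{\<bar>\<phi> x - \<phi> y\<bar> / \<bar>x - y\<bar> | x y. x \<noteq> y}"
  have bd: "\<bar>\<phi> x - \<phi> y\<bar> / \<bar>x - y\<bar> \<le> M" if "x \<noteq> y" for x y
  proof -
    have "\<bar>\<phi> x - \<phi> y\<bar> \<le> M * \<bar>x - y\<bar>" using mvt_abs[of \<phi> \<phi>' y x M] d b by blast
    thus ?thesis using that by (simp add: divide_le_eq)
  qed
  have bdd: "bdd_above ?S" by (rule bdd_aboveI[where M=M]) (use bd in blast)
  have mem: "\<bar>\<phi> x - \<phi> y\<bar> / \<bar>x - y\<bar> \<in> ?S" if "x \<noteq> y" for x y using that by blast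
  have le: "\<bar>\<phi> x - \<phi> y\<bar> / \<bar>x - y\<bar> \<le> lip1 \<phi>" if "x \<noteq> y" for x y
    unfolding lip1_def by (rule cSup_upper[OF mem[OF that] bdd])
  have "0 \<le> \<bar>\<phi> 0 - \<phi> 1\<bar> / \<bar>0 - 1\<bar>" by simp
  also have "\<dots> \<le> lip1 \<phi>" by (rule le) simp
  finally show "lip1 \<phi> \<ge> 0" .
  show "\<bar>\<phi> a - \<phi> c\<bar> \<le> lip1 \<phi> * \<bar>a - c\<bar>"
  proof (cases "a = c")
    case False
    thus ?thesis using le[OF False] by (simp add: divide_le_eq)
  qed simp
qed

lemma sup_le:
  fixes h :: "real \<Rightarrow> real"
  assumes "bdd_above (range (\<lambda>x. \<bar>h x\<bar>))"
  shows "\<bar>h x\<bar> \<le> supnorm h" "supnorm h \<ge> 0"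
proof -
  show 1: "\<bar>h x\<bar> \<le> supnorm h" for x unfolding supnorm_def by (rule cSup_upper) (use assms in auto)
  show "supnorm h \<ge> 0" using 1[of 0] by linarith
qed

lemma diff_cont:
  fixes f :: "real \<Rightarrow> real"
  assumes "\<And>x. f differentiable at x" shows "continuous_on UNIV f"
  by (rule continuous_at_imp_continuous_on) (use assms differentiable_imp_continuous_within in blast)

lemma C2_facts:
  assumes g: "circ_C2 g"
  shows "\<And>x. DERIV g x :> deriv g x" "\<And>x. DERIV (deriv g) x :> deriv (deriv g) x"
    "\<And>x. deriv g x > 0"
    "\<And>x. deriv g (x + 1) = deriv g x"
    "\<And>x. deriv (deriv g) (x + 1) = deriv (deriv g) x"
    "continuous_on UNIV (Ldiff g)"
    "\<And>x. DERIV (\<lambda>x. ln (deriv g x)) x :> Ldiff g x"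
proof -
  from g have g1: "\<And>x. g (x + 1) = g x + 1" "\<And>x. g differentiable at x"
    "\<And>x. deriv g differentiable at x" "continuous_on UNIV (deriv (deriv g))" "\<And>x. deriv g x > 0"
    unfolding circ_C2_def by auto
  show d1: "DERIV g x :> deriv g x" for x using g1 by (simp add: DERIV_deriv_iff_real_differentiable)
  show d2: "DERIV (deriv g) x :> deriv (deriv g) x" for x using g1 by (simp add: DERIV_deriv_iff_real_differentiable)
  show "deriv g x > 0" for x using g1 by auto
  show p1: "deriv g (x + 1) = deriv g x" for x using deriv_lift g1 by blast
  show "deriv (deriv g) (x + 1) = deriv (deriv g) x" for x using deriv_periodic[of "deriv g"] p1 by blast
  have "continuous_on UNIV (\<lambda>x. deriv (deriv g) x / deriv g x)"
    using g1(5) by (intro continuous_on_divide g1 diff_cont) (auto simp: less_le)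
  thus "continuous_on UNIV (Ldiff g)" unfolding Ldiff_def[abs_def] .
  show "DERIV (\<lambda>x. ln (deriv g x)) x :> Ldiff g x" for x
    using g1(5)[of x] by (auto intro!: derivative_eq_intros d2 simp: Ldiff_def field_simps)
qed

lemma Ldiff_periodic: "circ_C2 g \<Longrightarrow> Ldiff g (x + 1) = Ldiff g x"
  using C2_facts(4,5) by (simp add: Ldiff_def)

lemma Ldiff_bdd: "circ_C2 g \<Longrightarrow> bdd_above (range (\<lambda>x. \<bar>Ldiff g x\<bar>))"
  by (rule periodic_bounded) (auto intro: Ldiff_periodic C2_facts(6))

lemma C2_Lsup: assumes "circ_C2 g" shows "\<bar>Ldiff g x\<bar> \<le> supnorm (Ldiff g)" "supnorm (Ldiff g) \<ge> 0"
  using sup_le[OF Ldiff_bdd[OF assms]] by auto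

lemma C2_lip: assumes g: "circ_C2 g"
  shows "\<bar>ln (deriv g a) - ln (deriv g c)\<bar> \<le> lip1 (\<lambda>x. ln (deriv g x)) * \<bar>a - c\<bar>"
    "lip1 (\<lambda>x. ln (deriv g x)) \<ge> 0"
  using lip_gen[where \<phi>="\<lambda>x. ln (deriv g x)", OF C2_facts(7)[OF g] C2_Lsup(1)[OF g]] by auto

lemma C3_facts:
  assumes g: "circ_C3 g"
  shows "\<And>x. DERIV (Ldiff g) x :> (deriv (deriv (deriv g)) x * deriv g x - deriv (deriv g) x * deriv (deriv g) x) / (deriv g x * deriv g x)"
    "\<And>x. Ldiff g differentiable at x"
    "\<And>x. Sdiff g (x + 1) = Sdiff g x"
    "continuous_on UNIV (Sdiff g)"
proof -
  have c2: "circ_C2 g" and g3: "\<And>x. deriv (deriv g) differentiable at x" "continuous_on UNIV (deriv (deriv (deriv g)))"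
    using g unfolding circ_C3_def by auto
  note f = C2_facts[OF c2]
  have d3: "DERIV (deriv (deriv g)) x :> deriv (deriv (deriv g)) x" for x
    using g3 by (simp add: DERIV_deriv_iff_real_differentiable)
  have ne: "deriv g x \<noteq> 0" for x using f(3)[of x] by simp
  show dL: "DERIV (Ldiff g) x :> (deriv (deriv (deriv g)) x * deriv g x - deriv (deriv g) x * deriv (deriv g) x) / (deriv g x * deriv g x)" for x
    unfolding Ldiff_def[abs_def] by (rule DERIV_divide[OF d3 f(2) ne])
  show "Ldiff g differentiable at x" for x using dL[of x] real_differentiable_def by blast
  have Seq: "Sdiff g = (\<lambda>x. (deriv (deriv (deriv g)) x * deriv g x - deriv (deriv g) x * deriv (deriv g) x) / (deriv g x * deriv g x)
       - 1/2 * (deriv (deriv g) x / deriv g x)^2)"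
    by (rule ext) (simp add: Sdiff_def DERIV_imp_deriv[OF dL] Ldiff_def)
  have p3: "deriv (deriv (deriv g)) (x + 1) = deriv (deriv (deriv g)) x" for x
    using deriv_periodic[of "deriv (deriv g)"] f(5) by blast
  show "Sdiff g (x + 1) = Sdiff g x" for x unfolding Seq using f(4,5) p3 by simp
  have c1: "continuous_on UNIV (deriv g)" by (rule diff_cont) (use c2 in \<open>simp add: circ_C2_def\<close>)
  have c2': "continuous_on UNIV (deriv (deriv g))" using c2 by (simp add: circ_C2_def)
  show "continuous_on UNIV (Sdiff g)" unfolding Seq
    using ne by (intro continuous_intros c1 c2' g3) auto
qed

lemma C3_Ssup: assumes "circ_C3 g" shows "\<bar>Sdiff g x\<bar> \<le> supnorm (Sdiff g)" "supnorm (Sdiff g) \<ge> 0"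
  using sup_le[OF periodic_bounded[OF C3_facts(3,4)[OF assms]]] by auto



definition D2 :: "(real \<Rightarrow> real) \<Rightarrow> bool" where
  "D2 f \<longleftrightarrow> (\<forall>x. f differentiable at x) \<and> (\<forall>x. deriv f differentiable at x) \<and> (\<forall>x. deriv f x > 0)"

definition D3 :: "(real \<Rightarrow> real) \<Rightarrow> bool" where
  "D3 f \<longleftrightarrow> D2 f \<and> (\<forall>x. deriv (deriv f) differentiable at x)"

lemma D2_D:
  assumes "D2 f"
  shows "DERIV f x :> deriv f x" "DERIV (deriv f) x :> deriv (deriv f) x" "deriv f x > 0"
    "f differentiable at x" "deriv f differentiable at x"
  using assms unfolding D2_def by (auto simp: DERIV_deriv_iff_real_differentiable)

lemma C2_D2: "circ_C2 g \<Longrightarrow> D2 g"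
  unfolding circ_C2_def D2_def by auto

lemma C3_D3: "circ_C3 g \<Longrightarrow> D3 g"
  unfolding circ_C3_def D3_def using C2_D2 by auto

lemma comp_d1:
  assumes g: "D2 g" and f: "D2 f"
  shows "deriv (g \<circ> f) = (\<lambda>x. deriv g (f x) * deriv f x)"
  by (rule ext, rule DERIV_imp_deriv, rule DERIV_chain[OF D2_D(1)[OF g] D2_D(1)[OF f]])

lemma comp_d2:
  assumes g: "D2 g" and f: "D2 f"
  shows "deriv (deriv (g \<circ> f)) = (\<lambda>x. deriv (deriv g) (f x) * deriv f x * deriv f x + deriv g (f x) * deriv (deriv f) x)"
proof (rule ext)
  fix x
  have "DERIV (\<lambda>x. deriv g (f x) * deriv f x) x :>
      deriv (deriv g) (f x) * deriv f x * deriv f x + deriv (deriv f) x * deriv g (f x)"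
    by (rule DERIV_mult[OF DERIV_chain2[OF D2_D(2)[OF g] D2_D(1)[OF f]] D2_D(2)[OF f]])
  thus "deriv (deriv (g \<circ> f)) x = deriv (deriv g) (f x) * deriv f x * deriv f x + deriv g (f x) * deriv (deriv f) x"
    unfolding comp_d1[OF g f] by (simp add: DERIV_imp_deriv)
qed

lemma D2_comp:
  assumes g: "D2 g" and f: "D2 f"
  shows "D2 (g \<circ> f)"
  unfolding D2_def
proof (intro conjI allI)
  fix x
  show "(g \<circ> f) differentiable at x"
    by (rule differentiable_chain_at[OF D2_D(4)[OF f] D2_D(4)[OF g]])
  show "deriv (g \<circ> f) differentiable at x" unfolding comp_d1[OF g f]
    by (rule differentiable_mult[OF differentiable_compose[OF D2_D(5)[OF g] D2_D(4)[OF f]] D2_D(5)[OF f]])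
  show "deriv (g \<circ> f) x > 0" unfolding comp_d1[OF g f]
    using D2_D(3)[OF g, of "f x"] D2_D(3)[OF f, of x] by simp
qed

lemma D3_comp:
  assumes g: "D3 g" and f: "D3 f"
  shows "D3 (g \<circ> f)"
proof -
  have g2: "D2 g" and f2: "D2 f" using g f by (auto simp: D3_def)
  have "deriv (deriv (g \<circ> f)) differentiable at x" for x
  proof -
    have g3: "deriv (deriv g) differentiable at (f x)" and f3: "deriv (deriv f) differentiable at x"
      using g f by (auto simp: D3_def)
    show ?thesis unfolding comp_d2[OF g2 f2]
      by (rule differentiable_add[OF differentiable_mult[OF differentiable_mult[OF
           differentiable_compose[OF g3 D2_D(4)[OF f2]] D2_D(5)[OF f2]] D2_D(5)[OF f2]]
           differentiable_mult[OF differentiable_compose[OF D2_D(5)[OF g2] D2_D(4)[OF f2]] f3]])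
  qed
  thus ?thesis using D2_comp[OF g2 f2] by (simp add: D3_def)
qed

lemma Ldiff_comp:
  assumes g: "D2 g" and f: "D2 f"
  shows "Ldiff (g \<circ> f) x = Ldiff g (f x) * deriv f x + Ldiff f x"
  using D2_D(3)[OF g, of "f x"] D2_D(3)[OF f, of x]
  unfolding Ldiff_def unfolding comp_d2[OF g f] unfolding comp_d1[OF g f] by (simp add: field_simps)

lemma D3_Ldiff_diff:
  assumes "D3 f" shows "Ldiff f differentiable at x"
  using assms D2_D[of f x] unfolding D3_def Ldiff_def[abs_def]
  by (intro differentiable_divide) auto

lemma Sdiff_comp:
  assumes g: "D3 g" and f: "D3 f"
  shows "Sdiff (g \<circ> f) x = Sdiff g (f x) * (deriv f x)^2 + Sdiff f x"
proof -
  have g2: "D2 g" and f2: "D2 f" using g f by (auto simp: D3_def)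
  have eq: "Ldiff (g \<circ> f) = (\<lambda>x. Ldiff g (f x) * deriv f x + Ldiff f x)"
    by (rule ext) (rule Ldiff_comp[OF g2 f2])
  have dLg: "DERIV (Ldiff g) y :> deriv (Ldiff g) y" for y
    using D3_Ldiff_diff[OF g] by (simp add: DERIV_deriv_iff_real_differentiable)
  have dLf: "DERIV (Ldiff f) y :> deriv (Ldiff f) y" for y
    using D3_Ldiff_diff[OF f] by (simp add: DERIV_deriv_iff_real_differentiable)
  have "DERIV (\<lambda>x. Ldiff g (f x) * deriv f x + Ldiff f x) x :>
      deriv (Ldiff g) (f x) * deriv f x * deriv f x + deriv (deriv f) x * Ldiff g (f x) + deriv (Ldiff f) x"
    by (intro DERIV_add DERIV_mult DERIV_chain2[OF dLg] D2_D[OF f2] dLf)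
  hence dd: "deriv (Ldiff (g \<circ> f)) x = deriv (Ldiff g) (f x) * deriv f x * deriv f x + deriv (deriv f) x * Ldiff g (f x) + deriv (Ldiff f) x"
    unfolding eq by (rule DERIV_imp_deriv)
  have f'': "deriv (deriv f) x = Ldiff f x * deriv f x"
    using D2_D(3)[OF f2, of x] by (simp add: Ldiff_def)
  show ?thesis
    unfolding Sdiff_def dd f'' Ldiff_comp[OF g2 f2] by (simp add: algebra_simps power2_eq_square)
qed

lemma id_facts: "deriv id = (\<lambda>_. 1)" "deriv (\<lambda>_::real. 1::real) = (\<lambda>_. 0)"
proof -
  show "deriv id = (\<lambda>_. 1)" by (rule ext, rule DERIV_imp_deriv) (simp add: id_def)
  show "deriv (\<lambda>_::real. 1::real) = (\<lambda>_. 0)" by (rule ext, rule DERIV_imp_deriv) simp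
qed

lemma D3_id: "D3 id"
  unfolding D3_def D2_def id_facts by (auto simp: id_def)

lemma Ldiff_id: "Ldiff id x = 0" unfolding Ldiff_def id_facts by simp

lemma Sdiff_id: "Sdiff id x = 0"
proof -
  have "Ldiff id = (\<lambda>_. 0)" by (rule ext) (rule Ldiff_id)
  moreover have "deriv (\<lambda>_::real. 0::real) x = 0" by (rule DERIV_imp_deriv) simp
  ultimately show ?thesis unfolding Sdiff_def by simp
qed

lemma D2_id: "D2 id" using D3_id by (simp add: D3_def)

lemma Ldiff_id': "Ldiff (\<lambda>a. a) x = 0" using Ldiff_id by (simp add: id_def)
lemma Sdiff_id': "Sdiff (\<lambda>a. a) x = 0" using Sdiff_id by (simp add: id_def)

lemma lcomp_D2: "(\<And>k. D2 (w k)) \<Longrightarrow> D2 (lcomp w n)"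
  by (induction n) (auto intro: D2_comp D2_id)

lemma lcomp_D3: "(\<And>k. D3 (w k)) \<Longrightarrow> D3 (lcomp w n)"
  by (induction n) (auto intro: D3_comp D3_id)

lemma lcomp_deriv:
  assumes "\<And>k. D2 (w k)"
  shows "deriv (lcomp w (Suc n)) y = deriv (w n) (lcomp w n y) * deriv (lcomp w n) y"
  unfolding lcomp.simps comp_d1[OF assms lcomp_D2[OF assms]] ..

lemma lcomp_ln:
  assumes "\<And>k. D2 (w k)"
  shows "ln (deriv (lcomp w n) y) = (\<Sum>k<n. ln (deriv (w k) (lcomp w k y)))"
proof (induction n)
  case 0 thus ?case by (simp add: id_facts)
next
  case (Suc n)
  have "ln (deriv (lcomp w (Suc n)) y) = ln (deriv (w n) (lcomp w n y)) + ln (deriv (lcomp w n) y)"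
  proof -
    have "deriv (w n) (lcomp w n y) > 0" by (rule D2_D(3)[OF assms])
    moreover have "deriv (lcomp w n) y > 0" by (rule D2_D(3)[OF lcomp_D2[OF assms]])
    ultimately show ?thesis unfolding lcomp_deriv[OF assms] by (simp add: ln_mult)
  qed
  also have "\<dots> = (\<Sum>k<Suc n. ln (deriv (w k) (lcomp w k y)))" using Suc by simp
  finally show ?case .
qed

lemma lcomp_L:
  assumes "\<And>k. D2 (w k)"
  shows "Ldiff (lcomp w n) y = (\<Sum>k<n. Ldiff (w k) (lcomp w k y) * deriv (lcomp w k) y)"
proof (induction n)
  case 0 thus ?case by (simp add: Ldiff_id')
next
  case (Suc n)
  have "Ldiff (lcomp w (Suc n)) y = Ldiff (w n \<circ> lcomp w n) y" by (simp only: lcomp.simps)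
  also have "\<dots> = Ldiff (w n) (lcomp w n y) * deriv (lcomp w n) y + Ldiff (lcomp w n) y"
    by (rule Ldiff_comp[OF assms lcomp_D2[OF assms]])
  also have "\<dots> = (\<Sum>k<Suc n. Ldiff (w k) (lcomp w k y) * deriv (lcomp w k) y)" using Suc by simp
  finally show ?case .
qed

lemma lcomp_S:
  assumes "\<And>k. D3 (w k)"
  shows "Sdiff (lcomp w n) y = (\<Sum>k<n. Sdiff (w k) (lcomp w k y) * (deriv (lcomp w k) y)^2)"
proof (induction n)
  case 0 thus ?case by (simp add: Sdiff_id')
next
  case (Suc n)
  have "Sdiff (lcomp w (Suc n)) y = Sdiff (w n \<circ> lcomp w n) y" by (simp only: lcomp.simps)
  also have "\<dots> = Sdiff (w n) (lcomp w n y) * (deriv (lcomp w n) y)^2 + Sdiff (lcomp w n) y"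
    by (rule Sdiff_comp[OF assms lcomp_D3[OF assms]])
  also have "\<dots> = (\<Sum>k<Suc n. Sdiff (w k) (lcomp w k y) * (deriv (lcomp w k) y)^2)" using Suc by simp
  finally show ?case .
qed



lemma distortion:
  fixes w :: "nat \<Rightarrow> real \<Rightarrow> real" and L :: "nat \<Rightarrow> real"
  assumes D: "\<And>k. D2 (w k)"
    and lip: "\<And>k a c. \<bar>ln (deriv (w k) a) - ln (deriv (w k) c)\<bar> \<le> L k * \<bar>a - c\<bar>"
    and Lnn: "\<And>k. L k \<ge> 0"
    and Cb: "\<And>k. deriv (lcomp w k) x \<le> C * exp (real k * lam / 2)"
    and summ: "summable (\<lambda>k. L k * exp (real k * lam / 2))"
    and rad: "exp \<kappa> * C * (\<Sum>k. L k * exp (real k * lam / 2)) * r \<le> \<kappa>"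
    and r: "r \<ge> 0" and C: "C \<ge> 0"
  shows "\<forall>z\<in>{x-r..x+r}. deriv (lcomp w k) z \<le> exp \<kappa> * deriv (lcomp w k) x"
proof (induction k rule: less_induct)
  case (less k)
  show ?case
  proof
    fix z assume z: "z \<in> {x-r..x+r}"
    have Dl: "D2 (lcomp w j)" for j by (rule lcomp_D2[OF D])
    have step: "\<bar>lcomp w j z - lcomp w j x\<bar> \<le> exp \<kappa> * C * r * exp (real j * lam / 2)" if j: "j < k" for j
    proof -
      have "\<bar>lcomp w j z - lcomp w j x\<bar> \<le> (exp \<kappa> * deriv (lcomp w j) x) * \<bar>z - x\<bar>"
      proof (rule mvt_abs[where f'="deriv (lcomp w j)"])
        show "DERIV (lcomp w j) t :> deriv (lcomp w j) t" for t by (rule D2_D(1)[OF Dl])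
        fix t assume "min x z \<le> t" "t \<le> max x z"
        hence "t \<in> {x-r..x+r}" using z r by auto
        hence "deriv (lcomp w j) t \<le> exp \<kappa> * deriv (lcomp w j) x" using less j by blast
        moreover have "deriv (lcomp w j) t > 0" by (rule D2_D(3)[OF Dl])
        ultimately show "\<bar>deriv (lcomp w j) t\<bar> \<le> exp \<kappa> * deriv (lcomp w j) x" by simp
      qed
      also have "\<dots> \<le> (exp \<kappa> * (C * exp (real j * lam / 2))) * r"
      proof (rule mult_mono)
        show "exp \<kappa> * deriv (lcomp w j) x \<le> exp \<kappa> * (C * exp (real j * lam / 2))"
          using Cb[of j] by simp
        show "\<bar>z - x\<bar> \<le> r" using z by auto
        show "0 \<le> exp \<kappa> * (C * exp (real j * lam / 2))" using C by simp
      qed simp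
      finally show ?thesis by (simp add: algebra_simps)
    qed
    have "ln (deriv (lcomp w k) z) - ln (deriv (lcomp w k) x)
        = (\<Sum>j<k. ln (deriv (w j) (lcomp w j z)) - ln (deriv (w j) (lcomp w j x)))"
      unfolding lcomp_ln[OF D] by (simp add: sum_subtractf)
    also have "\<dots> \<le> (\<Sum>j<k. L j * (exp \<kappa> * C * r * exp (real j * lam / 2)))"
    proof (rule sum_mono)
      fix j assume "j \<in> {..<k}"
      hence "\<bar>lcomp w j z - lcomp w j x\<bar> \<le> exp \<kappa> * C * r * exp (real j * lam / 2)" using step by simp
      hence "L j * \<bar>lcomp w j z - lcomp w j x\<bar> \<le> L j * (exp \<kappa> * C * r * exp (real j * lam / 2))"
        using Lnn[of j] by (rule mult_left_mono)
      thus "ln (deriv (w j) (lcomp w j z)) - ln (deriv (w j) (lcomp w j x)) \<le> L j * (exp \<kappa> * C * r * exp (real j * lam / 2))"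
        using lip[of j "lcomp w j z" "lcomp w j x"] by linarith
    qed
    also have "\<dots> = exp \<kappa> * C * r * (\<Sum>j<k. L j * exp (real j * lam / 2))"
      by (simp add: sum_distrib_left algebra_simps)
    also have "\<dots> \<le> exp \<kappa> * C * r * (\<Sum>j. L j * exp (real j * lam / 2))"
      using r C Lnn by (intro mult_left_mono sum_le_suminf summ) auto
    also have "\<dots> \<le> \<kappa>" using rad by (simp add: algebra_simps)
    finally have "ln (deriv (lcomp w k) z) \<le> \<kappa> + ln (deriv (lcomp w k) x)" by simp
    hence "exp (ln (deriv (lcomp w k) z)) \<le> exp (\<kappa> + ln (deriv (lcomp w k) x))" by simp
    thus "deriv (lcomp w k) z \<le> exp \<kappa> * deriv (lcomp w k) x"
      using D2_D(3)[OF Dl, of k z] D2_D(3)[OF Dl, of k x] by (simp add: exp_add)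
  qed
qed



lemma C2val_facts:
  assumes "C2fin lam x w"
  shows "C2val lam x w \<ge> 1" "deriv (lcomp w n) x \<le> C2val lam x w * exp (real n * lam / 2)"
proof -
  have ne: "C2set lam x w \<noteq> {}" using assms by (simp add: C2fin_def)
  show "C2val lam x w \<ge> 1" unfolding C2val_def
    by (rule cInf_greatest[OF ne]) (auto simp: C2set_def)
  have "deriv (lcomp w n) x / exp (real n * lam / 2) \<le> C2val lam x w" unfolding C2val_def
  proof (rule cInf_greatest[OF ne])
    fix C assume "C \<in> C2set lam x w"
    hence "deriv (lcomp w n) x \<le> C * exp (real n * lam / 2)" by (auto simp: C2set_def)
    thus "deriv (lcomp w n) x / exp (real n * lam / 2) \<le> C" by (simp add: pos_divide_le_eq)
  qed
  thus "deriv (lcomp w n) x \<le> C2val lam x w * exp (real n * lam / 2)" by (simp add: pos_divide_le_eq)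
qed

lemma radius:
  fixes C S3 \<kappa> :: real
  assumes "C \<ge> 1" "S3 \<ge> 0" "\<kappa> > 0"
  shows "exp \<kappa> * C * S3 * (\<kappa> * exp (-\<kappa>) / (C * S3)) \<le> \<kappa>" "\<kappa> * exp (-\<kappa>) / (C * S3) \<ge> 0"
proof -
  show "\<kappa> * exp (-\<kappa>) / (C * S3) \<ge> 0" using assms by simp
  show "exp \<kappa> * C * S3 * (\<kappa> * exp (-\<kappa>) / (C * S3)) \<le> \<kappa>"
  proof (cases "S3 = 0")
    case False
    hence "exp \<kappa> * C * S3 * (\<kappa> * exp (-\<kappa>) / (C * S3)) = \<kappa> * (exp \<kappa> * exp (-\<kappa>))"
      using assms by (simp add: field_simps)
    also have "\<dots> = \<kappa>" by (simp add: exp_minus)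
    finally show ?thesis by simp
  qed (use assms in simp)
qed

lemma deriv_bound:
  assumes C2: "\<And>k. circ_C2 (w k)" and c2: "C2fin lam x w" and c3: "C3fin lam w" and kappa: "\<kappa> > 0"
    and y: "y \<in> {x - \<kappa> * exp (-\<kappa>) / (C2val lam x w * C3val lam w) ..
                    x + \<kappa> * exp (-\<kappa>) / (C2val lam x w * C3val lam w)}"
  shows "deriv (lcomp w k) y \<le> exp \<kappa> * C2val lam x w * exp (lam * real k / 2)"
proof -
  have D: "\<And>k. D2 (w k)" using C2 C2_D2 by blast
  have teq: "C3term lam w = (\<lambda>n. lip1 (\<lambda>x. ln (deriv (w n) x)) * exp (real n * lam / 2))"
    by (rule ext) (simp add: C3term_def)
  have summ: "summable (\<lambda>n. lip1 (\<lambda>x. ln (deriv (w n) x)) * exp (real n * lam / 2))"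
    using c3 by (simp add: C3fin_def teq)
  have Lnn: "\<And>k. lip1 (\<lambda>x. ln (deriv (w k) x)) \<ge> 0" using C2_lip(2)[OF C2] by blast
  have S3nn: "C3val lam w \<ge> 0" unfolding C3val_def teq
    by (rule suminf_nonneg[OF summ]) (simp add: Lnn)
  have C1: "C2val lam x w \<ge> 1" by (rule C2val_facts(1)[OF c2])
  have dist: "\<forall>z\<in>{x - \<kappa> * exp (-\<kappa>) / (C2val lam x w * C3val lam w) .. x + \<kappa> * exp (-\<kappa>) / (C2val lam x w * C3val lam w)}.
      deriv (lcomp w k) z \<le> exp \<kappa> * deriv (lcomp w k) x"
  proof (rule distortion[OF D C2_lip(1)[OF C2] Lnn C2val_facts(2)[OF c2] summ])
    show "exp \<kappa> * C2val lam x w * (\<Sum>k. lip1 (\<lambda>x. ln (deriv (w k) x)) * exp (real k * lam / 2)) *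
      (\<kappa> * exp (- \<kappa>) / (C2val lam x w * C3val lam w)) \<le> \<kappa>"
      using radius(1)[OF C1 S3nn kappa] by (simp add: C3val_def teq)
    show "0 \<le> \<kappa> * exp (- \<kappa>) / (C2val lam x w * C3val lam w)" by (rule radius(2)[OF C1 S3nn kappa])
    show "0 \<le> C2val lam x w" using C1 by simp
  qed
  have "deriv (lcomp w k) y \<le> exp \<kappa> * deriv (lcomp w k) x" using dist y by blast
  also have "\<dots> \<le> exp \<kappa> * (C2val lam x w * exp (real k * lam / 2))"
    using C2val_facts(2)[OF c2, of k] by simp
  finally show ?thesis by (simp add: mult.commute mult.left_commute)
qed

lemma L_bound:
  assumes C2: "\<And>k. circ_C2 (w k)" and c2: "C2fin lam x w" and c3: "C3fin lam w" and kappa: "\<kappa> > 0"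
    and s4: "summable (\<lambda>n. supnorm (Ldiff (w n)) * exp (lam * real n / 2))"
    and y: "y \<in> {x - \<kappa> * exp (-\<kappa>) / (C2val lam x w * C3val lam w) ..
                    x + \<kappa> * exp (-\<kappa>) / (C2val lam x w * C3val lam w)}"
  shows "\<bar>Ldiff (lcomp w n) y\<bar> \<le> C2val lam x w * (\<Sum>k. supnorm (Ldiff (w k)) * exp (lam * real k / 2)) * exp \<kappa>"
proof -
  have D: "\<And>k. D2 (w k)" using C2 C2_D2 by blast
  have C1: "C2val lam x w \<ge> 1" by (rule C2val_facts(1)[OF c2])
  have "\<bar>Ldiff (lcomp w n) y\<bar> \<le> (\<Sum>k<n. \<bar>Ldiff (w k) (lcomp w k y) * deriv (lcomp w k) y\<bar>)"
    unfolding lcomp_L[OF D] by (rule sum_abs)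
  also have "\<dots> \<le> (\<Sum>k<n. supnorm (Ldiff (w k)) * (exp \<kappa> * C2val lam x w * exp (lam * real k / 2)))"
  proof (rule sum_mono)
    fix k
    have p: "deriv (lcomp w k) y > 0" by (rule D2_D(3)[OF lcomp_D2[OF D]])
    have "\<bar>Ldiff (w k) (lcomp w k y) * deriv (lcomp w k) y\<bar> = \<bar>Ldiff (w k) (lcomp w k y)\<bar> * deriv (lcomp w k) y"
      using p by (simp add: abs_mult)
    also have "\<dots> \<le> supnorm (Ldiff (w k)) * (exp \<kappa> * C2val lam x w * exp (lam * real k / 2))"
      by (rule mult_mono[OF C2_Lsup(1)[OF C2] deriv_bound[OF C2 c2 c3 kappa y]]) (use p C2_Lsup(2)[OF C2] in auto)
    finally show "\<bar>Ldiff (w k) (lcomp w k y) * deriv (lcomp w k) y\<bar> \<le> supnorm (Ldiff (w k)) * (exp \<kappa> * C2val lam x w * exp (lam * real k / 2))" .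
  qed
  also have "\<dots> = C2val lam x w * exp \<kappa> * (\<Sum>k<n. supnorm (Ldiff (w k)) * exp (lam * real k / 2))"
    by (simp add: sum_distrib_left algebra_simps)
  also have "\<dots> \<le> C2val lam x w * exp \<kappa> * (\<Sum>k. supnorm (Ldiff (w k)) * exp (lam * real k / 2))"
    using C1 C2_Lsup(2)[OF C2] by (intro mult_left_mono sum_le_suminf s4) auto
  finally show ?thesis by (simp add: algebra_simps)
qed

lemma S_bound:
  assumes C3: "\<And>k. circ_C3 (w k)" and c2: "C2fin lam x w" and c3: "C3fin lam w" and kappa: "\<kappa> > 0"
    and s4: "summable (\<lambda>n. supnorm (Sdiff (w n)) * exp (lam * real n))"
    and y: "y \<in> {x - \<kappa> * exp (-\<kappa>) / (C2val lam x w * C3val lam w) ..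
                    x + \<kappa> * exp (-\<kappa>) / (C2val lam x w * C3val lam w)}"
  shows "\<bar>Sdiff (lcomp w n) y\<bar> \<le> (C2val lam x w)^2 * (\<Sum>k. supnorm (Sdiff (w k)) * exp (lam * real k)) * exp (2 * \<kappa>)"
proof -
  have D: "\<And>k. D3 (w k)" using C3 C3_D3 by blast
  have C2: "\<And>k. circ_C2 (w k)" using C3 by (simp add: circ_C3_def)
  have D2: "\<And>k. D2 (w k)" using C2 C2_D2 by blast
  have C1: "C2val lam x w \<ge> 1" by (rule C2val_facts(1)[OF c2])
  have "\<bar>Sdiff (lcomp w n) y\<bar> \<le> (\<Sum>k<n. \<bar>Sdiff (w k) (lcomp w k y) * (deriv (lcomp w k) y)^2\<bar>)"
    unfolding lcomp_S[OF D] by (rule sum_abs)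
  also have "\<dots> \<le> (\<Sum>k<n. supnorm (Sdiff (w k)) * (exp \<kappa> * C2val lam x w * exp (lam * real k / 2))^2)"
  proof (rule sum_mono)
    fix k
    have p: "deriv (lcomp w k) y > 0" by (rule D2_D(3)[OF lcomp_D2[OF D2]])
    have "(deriv (lcomp w k) y)^2 \<le> (exp \<kappa> * C2val lam x w * exp (lam * real k / 2))^2"
      by (rule power_mono[OF deriv_bound[OF C2 c2 c3 kappa y]]) (use p in simp)
    hence "\<bar>Sdiff (w k) (lcomp w k y)\<bar> * (deriv (lcomp w k) y)^2 \<le> supnorm (Sdiff (w k)) * (exp \<kappa> * C2val lam x w * exp (lam * real k / 2))^2"
      by (rule mult_mono[OF C3_Ssup(1)[OF C3]]) (use C3_Ssup(2)[OF C3] in auto)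
    thus "\<bar>Sdiff (w k) (lcomp w k y) * (deriv (lcomp w k) y)^2\<bar> \<le> supnorm (Sdiff (w k)) * (exp \<kappa> * C2val lam x w * exp (lam * real k / 2))^2"
      by (simp add: abs_mult)
  qed
  also have "\<dots> = (C2val lam x w)^2 * exp (2 * \<kappa>) * (\<Sum>k<n. supnorm (Sdiff (w k)) * exp (lam * real k))"
  proof -
    have e: "(exp \<kappa> * C2val lam x w * exp (lam * real k / 2))^2 = (C2val lam x w)^2 * exp (2 * \<kappa>) * exp (lam * real k)" for k
    proof -
      have "(exp \<kappa> * C2val lam x w * exp (lam * real k / 2))^2 = (C2val lam x w)^2 * (exp \<kappa> * exp \<kappa>) * (exp (lam * real k / 2) * exp (lam * real k / 2))"
        by (simp add: power2_eq_square algebra_simps)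
      also have "\<dots> = (C2val lam x w)^2 * exp (2 * \<kappa>) * exp (lam * real k)"
        by (simp add: exp_add[symmetric])
      finally show ?thesis .
    qed
    show ?thesis unfolding e by (simp add: sum_distrib_left algebra_simps)
  qed
  also have "\<dots> \<le> (C2val lam x w)^2 * exp (2 * \<kappa>) * (\<Sum>k. supnorm (Sdiff (w k)) * exp (lam * real k))"
    using C3_Ssup(2)[OF C3] by (intro mult_left_mono sum_le_suminf s4) auto
  finally show ?thesis by (simp add: algebra_simps)
qed

lemma geo_summable:
  fixes a :: real assumes "a < 0" shows "summable (\<lambda>n. exp (a * real n))"
proof -
  have "summable (\<lambda>n. exp a ^ n)" using assms by (intro summable_geometric) simp
  thus ?thesis by (simp add: exp_of_nat_mult[symmetric] mult.commute)
qed

theorem lemma3: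
  fixes \<mu> :: "(real \<Rightarrow> real) pmf" and \<nu> :: "real measure" and lam \<kappa> :: real
  assumes C2: "\<forall>g\<in>set_pmf \<mu>. circ_C2 g"
    and grp: "is_circ_group (sgen (set_pmf \<mu>))"
    and noinv: "\<not> (\<exists>m. circ_prob m \<and> (\<forall>g\<in>sgen (set_pmf \<mu>). circ_push g m = m))"
    and logint: "(\<integral>\<^sup>+ g. ennreal (supnorm (\<lambda>x. ln (deriv g x))) \<partial>measure_pmf \<mu>) < \<infinity>"
    and stat: "stationary \<mu> \<nu>"
    and lam: "lam = measure_pmf.expectation \<mu> (\<lambda>g. integral\<^sup>L \<nu> (\<lambda>x. ln (deriv g x)))"
    and lamneg: "lam < 0"
    and kappa: "\<kappa> > 0"
  shows
   "((\<integral>\<^sup>+ g. ennreal (supnorm (Ldiff g)) \<partial>measure_pmf \<mu>) < \<infinity> \<longrightarrow>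
      (AE w in PiM UNIV (\<lambda>_::nat. measure_pmf \<mu>).
         summable (\<lambda>n. supnorm (Ldiff (w n)) * exp (lam * real n / 2))) \<and>
      (\<forall>x. AE w in PiM UNIV (\<lambda>_::nat. measure_pmf \<mu>).
         C2fin lam x w \<and> C3fin lam w \<longrightarrow>
         (\<forall>n. \<forall>y\<in>{x - \<kappa> * exp (-\<kappa>) / (C2val lam x w * C3val lam w) ..
                    x + \<kappa> * exp (-\<kappa>) / (C2val lam x w * C3val lam w)}.
            \<bar>Ldiff (lcomp w n) y\<bar> \<le> C2val lam x w
               * (\<Sum>k. supnorm (Ldiff (w k)) * exp (lam * real k / 2)) * exp \<kappa>)))
    \<and>
    ((\<forall>g\<in>set_pmf \<mu>. circ_C3 g) \<and>
     (\<integral>\<^sup>+ g. ennreal (supnorm (Sdiff g)) \<partial>measure_pmf \<mu>) < \<infinity> \<longrightarrow>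
      (AE w in PiM UNIV (\<lambda>_::nat. measure_pmf \<mu>).
         summable (\<lambda>n. supnorm (Sdiff (w n)) * exp (lam * real n))) \<and>
      (\<forall>x. AE w in PiM UNIV (\<lambda>_::nat. measure_pmf \<mu>).
         C2fin lam x w \<and> C3fin lam w \<longrightarrow>
         (\<forall>n. \<forall>y\<in>{x - \<kappa> * exp (-\<kappa>) / (C2val lam x w * C3val lam w) ..
                    x + \<kappa> * exp (-\<kappa>) / (C2val lam x w * C3val lam w)}.
            \<bar>Sdiff (lcomp w n) y\<bar> \<le> (C2val lam x w)^2
               * (\<Sum>k. supnorm (Sdiff (w k)) * exp (lam * real k)) * exp (2 * \<kappa>))))"
proof (intro conjI impI allI)
  have sL: "summable (\<lambda>n. exp (lam * real n / 2))"
    using geo_summable[of "lam/2"] lamneg by (simp add: mult.commute)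
  have sS: "summable (\<lambda>n. exp (lam * real n))" using geo_summable[of lam] lamneg by simp
  note sup = AE_support[of \<mu>]
  {
    assume Lint: "(\<integral>\<^sup>+ g. ennreal (supnorm (Ldiff g)) \<partial>measure_pmf \<mu>) < \<infinity>"
    show AEL: "AE w in PiM UNIV (\<lambda>_::nat. measure_pmf \<mu>).
         summable (\<lambda>n. supnorm (Ldiff (w n)) * exp (lam * real n / 2))"
      using AE_summable[where F="\<lambda>g. supnorm (Ldiff g)" and c="\<lambda>n. exp (lam * real n / 2)", OF Lint _ sL]
        C2 C2_Lsup(2) by auto
    fix x
    show "AE w in PiM UNIV (\<lambda>_::nat. measure_pmf \<mu>).
         C2fin lam x w \<and> C3fin lam w \<longrightarrow>
         (\<forall>n. \<forall>y\<in>{x - \<kappa> * exp (-\<kappa>) / (C2val lam x w * C3val lam w) ..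
                    x + \<kappa> * exp (-\<kappa>) / (C2val lam x w * C3val lam w)}.
            \<bar>Ldiff (lcomp w n) y\<bar> \<le> C2val lam x w
               * (\<Sum>k. supnorm (Ldiff (w k)) * exp (lam * real k / 2)) * exp \<kappa>)"
      using AEL sup
    proof eventually_elim
      case (elim w)
      have "\<And>k. circ_C2 (w k)" using elim C2 by blast
      thus ?case using L_bound[OF _ _ _ kappa elim(1)] by blast
    qed
  }
  {
    assume Sint: "(\<forall>g\<in>set_pmf \<mu>. circ_C3 g) \<and> (\<integral>\<^sup>+ g. ennreal (supnorm (Sdiff g)) \<partial>measure_pmf \<mu>) < \<infinity>"
    show AES: "AE w in PiM UNIV (\<lambda>_::nat. measure_pmf \<mu>).
         summable (\<lambda>n. supnorm (Sdiff (w n)) * exp (lam * real n))"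
      using AE_summable[where F="\<lambda>g. supnorm (Sdiff g)" and c="\<lambda>n. exp (lam * real n)", OF conjunct2[OF Sint] _ sS]
        Sint C3_Ssup(2) by auto
    fix x
    show "AE w in PiM UNIV (\<lambda>_::nat. measure_pmf \<mu>).
         C2fin lam x w \<and> C3fin lam w \<longrightarrow>
         (\<forall>n. \<forall>y\<in>{x - \<kappa> * exp (-\<kappa>) / (C2val lam x w * C3val lam w) ..
                    x + \<kappa> * exp (-\<kappa>) / (C2val lam x w * C3val lam w)}.
            \<bar>Sdiff (lcomp w n) y\<bar> \<le> (C2val lam x w)^2
               * (\<Sum>k. supnorm (Sdiff (w k)) * exp (lam * real k)) * exp (2 * \<kappa>))"
      using AES sup
    proof eventually_elim
      case (elim w)
      have "\<And>k. circ_C3 (w k)" using elim Sint by blast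
      thus ?case using S_bound[OF _ _ _ kappa elim(1)] by blast
    qed
  }
qed

end
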